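(* Let $L$ be a regular language over a nonempty finite alphabet $A$, and let $\mathcal{A}_L$ be the minimal automaton of $L$. Then the following four conditions are equivalent: (1) $\mathcal{A}_L$ is a zero automaton; (2) $L$ is a language with zero, i.e. the syntactic monoid of $L$ has a zero element; (3) $L$ obeys the zero-one law, i.e. $\mu(L)=\lim_{n\to\infty}\mu_n(L)$ exists and $\mu(L)\in\{0,1\}$; (4) $L$ is recognised by a quasi-zero automaton.
   Context: All automata are complete, deterministic, finite and accessible: $\mathcal{A}=\langle Q,A,\cdot,q_0,F\rangle$ with transition function $\cdot:Q\times A\to Q$ extended to words, and $L(\mathcal{A})=\{w\in A^*: q_0\cdot w\in F\}$. For a language $L\subseteq A^*$, $\mu_n(L)=|L\cap A^n|/|A|^n$ and $\mu(L)=\lim_{n\to\infty}\mu_n(L)$ when the limit exists; $L$ obeys the zero-one law (is a zero-one language) if $L$ is regular, $\mu(L)$ exists and $\mu(L)\in\{0,1\}$. The syntactic monoid of $L$ is $A^*/\sim_L$ where $u\sim_L v$ iff for all $x,y\in A^*$, $xuy\in L\Leftrightarrow xvy\in L$. An element $0$ of a monoid $M$ is a zero if $0m=m0=0$ for all $m\in M$. A state $q$ is a sink state if $q\cdot a=q$ for all $a\in A$. A word $w$ is synchronising for $\mathcal{A}$ if there is a state $q$ with $p\cdot w=q$ for all $p\in Q$; $\mathcal{A}$ is synchronising if it has a synchronising word. A zero automaton is a synchronising automaton having a sink state. A strongly connected sink component of $\mathcal{A}$ is a nonempty set $P\subseteq Q$ such that every state of $P$ is reachable (by some word) from every other state of $P$,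 and no state outside $P$ is reachable from a state of $P$; $\mathrm{Sink}(\mathcal{A})$ denotes the family of all strongly connected sink components. $\mathcal{A}$ is quasi-zero if either $\bigcup\mathrm{Sink}(\mathcal{A})\subseteq F$ or $\bigcup\mathrm{Sink}(\mathcal{A})\cap F=\emptyset$. *)

theory Defs
  imports Complex_Main "HOL-Algebra.Group"
begin

definition dfa :: "'s set \<Rightarrow> ('s \<Rightarrow> 'a \<Rightarrow> 's) \<Rightarrow> 's \<Rightarrow> 's set \<Rightarrow> bool" where
  "dfa Q delta q0 F \<longleftrightarrow> finite Q \<and> q0 \<in> Q \<and> F \<subseteq> Q \<and>
     (\<forall>q\<in>Q. \<forall>a. delta q a \<in> Q) \<and> (\<forall>q\<in>Q. \<exists>w. foldl delta q0 w = q)"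

definition lang :: "('s \<Rightarrow> 'a \<Rightarrow> 's) \<Rightarrow> 's \<Rightarrow> 's set \<Rightarrow> 'a list set" where
  "lang delta q0 F = {w. foldl delta q0 w \<in> F}"

definition regular :: "'a list set \<Rightarrow> bool" where
  "regular L \<longleftrightarrow> (\<exists>(Q::nat set) delta q0 F. dfa Q delta q0 F \<and> lang delta q0 F = L)"

definition reach :: "('s \<Rightarrow> 'a \<Rightarrow> 's) \<Rightarrow> 's \<Rightarrow> 's \<Rightarrow> bool" where
  "reach delta p q \<longleftrightarrow> (\<exists>w. foldl delta p w = q)"

definition sink_state :: "'s set \<Rightarrow> ('s \<Rightarrow> 'a \<Rightarrow> 's) \<Rightarrow> 's \<Rightarrow> bool" where
  "sink_state Q delta q \<longleftrightarrow> q \<in> Q \<and> (\<forall>a. delta q a = q)"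

definition synchronising :: "'s set \<Rightarrow> ('s \<Rightarrow> 'a \<Rightarrow> 's) \<Rightarrow> bool" where
  "synchronising Q delta \<longleftrightarrow> (\<exists>w q. \<forall>p\<in>Q. foldl delta p w = q)"

definition zero_automaton :: "'s set \<Rightarrow> ('s \<Rightarrow> 'a \<Rightarrow> 's) \<Rightarrow> bool" where
  "zero_automaton Q delta \<longleftrightarrow> synchronising Q delta \<and> (\<exists>q. sink_state Q delta q)"

definition sink_component :: "'s set \<Rightarrow> ('s \<Rightarrow> 'a \<Rightarrow> 's) \<Rightarrow> 's set \<Rightarrow> bool" where
  "sink_component Q delta P \<longleftrightarrow> P \<noteq> {} \<and> P \<subseteq> Q \<and>
     (\<forall>p\<in>P. \<forall>q\<in>P. reach delta p q) \<and> (\<forall>p\<in>P. \<forall>q. reach delta p q \<longrightarrow> q \<in> P)"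

definition Sink :: "'s set \<Rightarrow> ('s \<Rightarrow> 'a \<Rightarrow> 's) \<Rightarrow> 's set set" where
  "Sink Q delta = {P. sink_component Q delta P}"

definition quasi_zero :: "'s set \<Rightarrow> ('s \<Rightarrow> 'a \<Rightarrow> 's) \<Rightarrow> 's set \<Rightarrow> bool" where
  "quasi_zero Q delta F \<longleftrightarrow> \<Union>(Sink Q delta) \<subseteq> F \<or> \<Union>(Sink Q delta) \<inter> F = {}"

text \<open>Minimal automaton of L (states = left quotients u^{-1} L).\<close>

definition lquot :: "'a list set \<Rightarrow> 'a list \<Rightarrow> 'a list set" where
  "lquot L u = {v. u @ v \<in> L}"

definition min_states :: "'a list set \<Rightarrow> 'a list set set" where
  "min_states L = range (lquot L)"

definition min_delta :: "'a list set \<Rightarrow> 'a \<Rightarrow> 'a list set" where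
  "min_delta X a = {v. a # v \<in> X}"

definition min_final :: "'a list set \<Rightarrow> 'a list set set" where
  "min_final L = {X \<in> min_states L. [] \<in> X}"

definition synt_rel :: "'a list set \<Rightarrow> ('a list \<times> 'a list) set" where
  "synt_rel L = {(u, v). \<forall>x y. x @ u @ y \<in> L \<longleftrightarrow> x @ v @ y \<in> L}"

definition synt_monoid :: "'a list set \<Rightarrow> 'a list set monoid" where
  "synt_monoid L = \<lparr> carrier = UNIV // synt_rel L,
     mult = (\<lambda>X Y. synt_rel L `` {(SOME u. u \<in> X) @ (SOME v. v \<in> Y)}),
     one = synt_rel L `` {[]} \<rparr>"

definition is_zero :: "('b, 'c) monoid_scheme \<Rightarrow> 'b \<Rightarrow> bool" where
  "is_zero M z \<longleftrightarrow> z \<in> carrier M \<and> (\<forall>m\<in>carrier M. z \<otimes>\<^bsub>M\<^esub> m = z \<and> m \<otimes>\<^bsub>M\<^esub> z = z)"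

definition language_with_zero :: "'a list set \<Rightarrow> bool" where
  "language_with_zero L \<longleftrightarrow> (\<exists>z. is_zero (synt_monoid L) z)"

definition mu_n :: "('a::finite) list set \<Rightarrow> nat \<Rightarrow> real" where
  "mu_n L n = real (card {w \<in> L. length w = n}) / real (card (UNIV::'a set)) ^ n"

definition zero_one :: "('a::finite) list set \<Rightarrow> bool" where
  "zero_one L \<longleftrightarrow> regular L \<and> (\<exists>l. (mu_n L \<longlonglongrightarrow> l) \<and> (l = 0 \<or> l = 1))"

end

theory Submission
  imports Defs
begin


lemma fin_len: "finite {xs::'a::finite list. length xs = n}"
  using finite_lists_length_eq[of "UNIV::'a set" n] by simp

lemma card_len: "card {xs::'a::finite list. length xs = n} = card (UNIV::'a set)^n"
  using card_lists_length_eq[of "UNIV::'a set" n] by simp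

definition hasf :: "'a list \<Rightarrow> 'a list \<Rightarrow> bool" where
  "hasf w v \<longleftrightarrow> (\<exists>x y. v = x@w@y)"

lemma bad_card:
  fixes w :: "'a::finite list"
  assumes "length w = k"
  shows "card {v. length v = m*k + r \<and> \<not> hasf w v} \<le> (card (UNIV::'a set)^k - 1)^m * card (UNIV::'a set)^r"
proof (induction m)
  case 0
  have "card {v::'a list. length v = 0*k + r \<and> \<not> hasf w v} \<le> card {v::'a list. length v = r}"
    by (rule card_mono[OF fin_len]) auto
  then show ?case by (simp add: card_len)
next
  case (Suc m)
  let ?G = "{a::'a list. length a = k \<and> a \<noteq> w}"
  let ?N = "{v. length v = m*k + r \<and> \<not> hasf w v}"
  have sub: "{v. length v = Suc m*k + r \<and> \<not> hasf w v} \<subseteq> (\<lambda>(a,v). a@v) ` (?G \<times> ?N)"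
  proof
    fix v assume v: "v \<in> {v. length v = Suc m*k + r \<and> \<not> hasf w v}"
    have t: "take k v \<noteq> w"
    proof
      assume "take k v = w"
      then have "v = [] @ w @ drop k v" by (metis append_Nil append_take_drop_id)
      then show False using v unfolding hasf_def by blast
    qed
    have d: "\<not> hasf w (drop k v)"
    proof
      assume "hasf w (drop k v)"
      then obtain x y where "drop k v = x@w@y" unfolding hasf_def by blast
      then have "v = (take k v @ x) @ w @ y" by (metis append.assoc append_take_drop_id)
      then show False using v unfolding hasf_def by blast
    qed
    show "v \<in> (\<lambda>(a,v). a@v) ` (?G \<times> ?N)"
      by (rule image_eqI[of _ _ "(take k v, drop k v)"]) (use v t d in auto)
  qed
  have finN: "finite ?N" by (rule finite_subset[OF _ fin_len[of "m*k+r"]]) auto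
  have finG: "finite ?G" by (rule finite_subset[OF _ fin_len[of k]]) auto
  have G: "?G = {a. length a = k} - {w}" using assms by auto
  have cG: "card ?G = card (UNIV::'a set)^k - 1"
    unfolding G using assms by (simp add: card_Diff_singleton fin_len card_len)
  have "card {v. length v = Suc m*k + r \<and> \<not> hasf w v} \<le> card ((\<lambda>(a,v). a@v) ` (?G \<times> ?N))"
    by (rule card_mono[OF _ sub]) (use finN finG in auto)
  also have "\<dots> \<le> card (?G \<times> ?N)" by (rule card_image_le) (use finN finG in auto)
  also have "\<dots> = card ?G * card ?N" by (rule card_cartesian_product)
  also have "\<dots> \<le> (card (UNIV::'a set)^k - 1) * ((card (UNIV::'a set)^k - 1)^m * card (UNIV::'a set)^r)"
    unfolding cG using Suc.IH by (rule mult_left_mono) simp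
  finally show ?case by (simp add: mult.assoc)
qed

lemma div_tends: "(k::nat) > 0 \<Longrightarrow> filterlim (\<lambda>n. n div k) sequentially sequentially"
  unfolding filterlim_at_top eventually_sequentially
proof (intro allI exI allI impI)
  fix Z n assume k: "k > 0" and "Z * k \<le> n"
  from \<open>Z * k \<le> n\<close> have "Z*k div k \<le> n div k" by (rule div_le_mono)
  then show "Z \<le> n div k" using k by simp
qed

lemma dens:
  fixes L :: "('a::finite) list set"
  assumes H0: "\<And>x y. x@w@y \<in> L \<longleftrightarrow> b"
  shows "mu_n L \<longlonglongrightarrow> (if b then 1 else 0)"
proof -
  define w' where "w' = undefined # w"
  have H: "x@w'@y \<in> L \<longleftrightarrow> b" for x y using H0[of "x@[undefined]" y] unfolding w'_def by simp
  define k where "k = length w'"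
  have k: "k > 0" unfolding k_def w'_def by simp
  define C where "C = card (UNIV::'a set)"
  have C: "C > 0" unfolding C_def by (simp add: card_gt_0_iff)
  define bad where "bad n = {v::'a list. length v = n \<and> \<not> hasf w' v}" for n
  define \<rho> where "\<rho> = (real C^k - 1)/ real C^k"
  have Ck: "real C^k \<ge> 1" using C by simp
  have \<rho>: "0 \<le> \<rho>" "\<rho> < 1" unfolding \<rho>_def using Ck by (auto simp: divide_less_eq)
  have bnd: "real (card (bad n)) / real C^n \<le> \<rho>^(n div k)" for n
  proof -
    define m where "m = n div k"
    define r where "r = n mod k"
    have n: "n = m*k + r" unfolding m_def r_def by simp
    have "card (bad n) \<le> (C^k-1)^m * C^r"
      unfolding bad_def n C_def by (rule bad_card) (simp add: k_def)
    then have "real (card (bad n)) \<le> real ((C^k-1)^m * C^r)" by linarith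
    also have "\<dots> = (real C^k - 1)^m * real C^r"
      using C by (simp add: of_nat_diff)
    finally have A: "real (card (bad n)) \<le> (real C^k - 1)^m * real C^r" .
    have B: "real C^n = (real C^k)^m * real C^r" unfolding n by (simp add: power_add power_mult mult.commute)
    have "real (card (bad n)) / real C^n \<le> ((real C^k - 1)^m * real C^r) / ((real C^k)^m * real C^r)"
      unfolding B by (rule divide_right_mono[OF A]) simp
    also have "\<dots> = \<rho>^m" unfolding \<rho>_def using C by (simp add: power_divide)
    finally show ?thesis unfolding m_def .
  qed
  have lim0: "(\<lambda>n. \<rho>^(n div k)) \<longlonglongrightarrow> 0"
    using filterlim_compose[OF LIMSEQ_realpow_zero[OF \<rho>] div_tends[OF k]] .
  have badlim: "(\<lambda>n. real (card (bad n)) / real C^n) \<longlonglongrightarrow> 0"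
  proof -
    have e1: "\<forall>n. (0::real) \<le> real (card (bad n)) / real C^n" by simp
    have e2: "\<forall>n. real (card (bad n)) / real C^n \<le> \<rho>^(n div k)" using bnd by blast
    show ?thesis by (rule tendsto_sandwich[OF always_eventually[OF e1] always_eventually[OF e2] tendsto_const lim0])
  qed
  have finb: "finite (bad n)" for n unfolding bad_def by (rule finite_subset[OF _ fin_len[of n]]) auto
  have finL: "finite {v\<in>L. length v = n}" for n by (rule finite_subset[OF _ fin_len[of n]]) auto
  have mu: "mu_n L n = real (card {v\<in>L. length v = n}) / real C^n" for n
    unfolding mu_n_def C_def ..
  show ?thesis
  proof (cases b)
    case True
    have "{v. length v = n} \<subseteq> {v\<in>L. length v = n} \<union> bad n" for n
      using H True unfolding bad_def hasf_def by auto
    then have "card {v::'a list. length v = n} \<le> card ({v\<in>L. length v = n} \<union> bad n)" for n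
      by (intro card_mono) (use finb finL in auto)
    also have "\<dots>n \<le> card {v\<in>L. length v = n} + card (bad n)" for n by (rule card_Un_le)
    finally have c0: "card {v::'a list. length v = n} \<le> card {v\<in>L. length v = n} + card (bad n)" for n .
    have c: "real C^n \<le> real (card {v\<in>L. length v = n}) + real (card (bad n))" for n
    proof -
      have "C^n \<le> card {v\<in>L. length v = n} + card (bad n)" using c0[of n] unfolding card_len C_def .
      then have "real (C^n) \<le> real (card {v\<in>L. length v = n} + card (bad n))" by (simp only: of_nat_le_iff)
      then show ?thesis by simp
    qed
    have lo: "1 - real (card (bad n)) / real C^n \<le> mu_n L n" for n
    proof -
      have P: "real C^n > 0" using C by simp
      have "1 - real (card (bad n)) / real C^n = real C^n / real C^n - real (card (bad n)) / real C^n"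
        using P by simp
      also have "\<dots> = (real C^n - real (card (bad n))) / real C^n"
        by (rule diff_divide_distrib[symmetric])
      also have "\<dots> \<le> real (card {v\<in>L. length v = n}) / real C^n"
        by (rule divide_right_mono) (use c[of n] in auto)
      finally show ?thesis unfolding mu .
    qed
    have up: "mu_n L n \<le> 1" for n
    proof -
      have "card {v\<in>L. length v = n} \<le> card {v::'a list. length v = n}"
        by (rule card_mono[OF fin_len]) auto
      then have "real (card {v\<in>L. length v = n}) \<le> real C^n"
        using card_len[where 'a='a] unfolding C_def by (metis of_nat_le_iff of_nat_power)
      then show ?thesis unfolding mu using C by simp
    qed
    have "(\<lambda>n. 1 - real (card (bad n)) / real C^n) \<longlonglongrightarrow> 1 - 0"
      by (intro tendsto_intros badlim)
    then have l1: "(\<lambda>n. 1 - real (card (bad n)) / real C^n) \<longlonglongrightarrow> 1" by simp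
    have e1: "\<forall>n. 1 - real (card (bad n)) / real C^n \<le> mu_n L n" using lo by blast
    have e2: "\<forall>n. mu_n L n \<le> 1" using up by blast
    have "mu_n L \<longlonglongrightarrow> 1"
      by (rule tendsto_sandwich[OF always_eventually[OF e1] always_eventually[OF e2] l1 tendsto_const])
    then show ?thesis using True by simp
  next
    case False
    have "{v\<in>L. length v = n} \<subseteq> bad n" for n
      using H False unfolding bad_def hasf_def by auto
    then have "card {v\<in>L. length v = n} \<le> card (bad n)" for n by (intro card_mono finb)
    then have up: "mu_n L n \<le> real (card (bad n)) / real C^n" for n
      unfolding mu by (intro divide_right_mono) auto
    have lo: "0 \<le> mu_n L n" for n unfolding mu by simp
    have e1: "\<forall>n. 0 \<le> mu_n L n" using lo by blast
    have e2: "\<forall>n. mu_n L n \<le> real (card (bad n)) / real C^n" using up by blast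
    have "mu_n L \<longlonglongrightarrow> 0"
      by (rule tendsto_sandwich[OF always_eventually[OF e1] always_eventually[OF e2] tendsto_const badlim])
    then show ?thesis using False by simp
  qed
qed



lemma sr_iff: "(u,v) \<in> synt_rel L \<longleftrightarrow> (\<forall>x y. x@u@y \<in> L \<longleftrightarrow> x@v@y \<in> L)"
  unfolding synt_rel_def by simp

lemma sr_refl: "(u,u) \<in> synt_rel L" by (simp add: sr_iff)
lemma sr_sym: "(u,v) \<in> synt_rel L \<Longrightarrow> (v,u) \<in> synt_rel L" by (simp add: sr_iff)
lemma sr_trans: "(u,v) \<in> synt_rel L \<Longrightarrow> (v,z) \<in> synt_rel L \<Longrightarrow> (u,z) \<in> synt_rel L"
  by (simp add: sr_iff)
lemma sr_cong: assumes "(u,u') \<in> synt_rel L" "(v,v') \<in> synt_rel L"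
  shows "(u@v,u'@v') \<in> synt_rel L"
  unfolding sr_iff
proof (intro allI)
  fix x y
  have "x@(u@v)@y \<in> L \<longleftrightarrow> x@u@(v@y) \<in> L" by simp
  also have "\<dots> \<longleftrightarrow> x@u'@(v@y) \<in> L" using assms(1) unfolding sr_iff by blast
  also have "\<dots> \<longleftrightarrow> (x@u')@v@y \<in> L" by simp
  also have "\<dots> \<longleftrightarrow> (x@u')@v'@y \<in> L" using assms(2) unfolding sr_iff by blast
  finally show "x@(u@v)@y \<in> L \<longleftrightarrow> x@(u'@v')@y \<in> L" by simp
qed

lemma zero_from_factor:
  assumes H: "\<And>x y. x@w@y \<in> L \<longleftrightarrow> b"
  shows "language_with_zero L"
proof -
  define Z where "Z = synt_rel L `` {w}"
  have Zeq: "u \<in> Z \<longleftrightarrow> (\<forall>x y. x@u@y \<in> L \<longleftrightarrow> b)" for u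
    unfolding Z_def sr_iff Image_singleton_iff using H by blast
  have cls: "synt_rel L `` {u} = Z" if "u \<in> Z" for u
  proof -
    from that have U: "\<forall>x y. x@u@y \<in> L \<longleftrightarrow> b" by (simp add: Zeq)
    have "v \<in> synt_rel L``{u} \<longleftrightarrow> v \<in> Z" for v unfolding Image_singleton_iff sr_iff Zeq using U by (simp, blast)
    then show ?thesis by blast
  qed
  have wZ: "w \<in> Z" unfolding Z_def by (simp add: sr_refl)
  have u0: "(SOME u. u \<in> Z) \<in> Z" using wZ by (rule someI)
  have app: "u@v \<in> Z" "v@u \<in> Z" if "u \<in> Z" for u v
    using that unfolding Zeq by (metis append.assoc)+
  have "is_zero (synt_monoid L) Z"
    unfolding is_zero_def synt_monoid_def
    using cls[OF app(1)[OF u0]] cls[OF app(2)[OF u0]] by (simp add: Z_def quotientI)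
  then show ?thesis unfolding language_with_zero_def by blast
qed

lemma factor_from_zero:
  assumes "language_with_zero L"
  shows "\<exists>w b. \<forall>x y. x@w@y \<in> L \<longleftrightarrow> b"
proof -
  obtain Z where Z: "is_zero (synt_monoid L) Z" using assms unfolding language_with_zero_def by blast
  then have "Z \<in> UNIV // synt_rel L" unfolding is_zero_def synt_monoid_def by simp
  then obtain w where w: "Z = synt_rel L `` {w}" by (auto elim: quotientE)
  have mulZ: "synt_rel L `` {(SOME u. u \<in> Z) @ (SOME v. v \<in> synt_rel L `` {y})} = Z
     \<and> synt_rel L `` {(SOME v. v \<in> synt_rel L `` {y}) @ (SOME u. u \<in> Z)} = Z" for y
  proof -
    have all: "\<forall>m\<in>UNIV // synt_rel L. synt_rel L `` {(SOME u. u \<in> Z) @ (SOME v. v \<in> m)} = Z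
       \<and> synt_rel L `` {(SOME u. u \<in> m) @ (SOME v. v \<in> Z)} = Z"
      using Z unfolding is_zero_def synt_monoid_def by simp
    show ?thesis using bspec[OF all quotientI[of y UNIV "synt_rel L"]] by simp
  qed
  have wZ: "w \<in> Z" unfolding w by (simp add: sr_refl)
  have u0: "(w, SOME u. u \<in> Z) \<in> synt_rel L" using someI[of "\<lambda>u. u \<in> Z", OF wZ] unfolding w by simp
  have v0: "(y, SOME v. v \<in> synt_rel L `` {y}) \<in> synt_rel L" for y
    using someI[of "\<lambda>v. v \<in> synt_rel L `` {y}" y] by (simp add: sr_refl)
  have inZ: "(w, z) \<in> synt_rel L" if "synt_rel L `` {z} = Z" for z
  proof -
    have "z \<in> synt_rel L `` {z}" by (simp add: sr_refl)
    then show ?thesis using that unfolding w by simp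
  qed
  have right: "(w, w@y) \<in> synt_rel L" for y
  proof -
    have "(w@y, (SOME u. u \<in> Z) @ (SOME v. v \<in> synt_rel L `` {y})) \<in> synt_rel L"
      by (rule sr_cong[OF u0 v0])
    moreover have "(w, (SOME u. u \<in> Z) @ (SOME v. v \<in> synt_rel L `` {y})) \<in> synt_rel L"
      using inZ mulZ by blast
    ultimately show ?thesis by (meson sr_sym sr_trans)
  qed
  have left: "(w, x@w) \<in> synt_rel L" for x
  proof -
    have "(x@w, (SOME v. v \<in> synt_rel L `` {x}) @ (SOME u. u \<in> Z)) \<in> synt_rel L"
      by (rule sr_cong[OF v0 u0])
    moreover have "(w, (SOME v. v \<in> synt_rel L `` {x}) @ (SOME u. u \<in> Z)) \<in> synt_rel L"
      using inZ mulZ by blast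
    ultimately show ?thesis by (meson sr_sym sr_trans)
  qed
  have "(w, x@w@y) \<in> synt_rel L" for x y
  proof -
    have "(x@w, x@(w@y)) \<in> synt_rel L" by (rule sr_cong[OF sr_refl right])
    then show ?thesis using left sr_trans by blast
  qed
  then have "x@w@y \<in> L \<longleftrightarrow> w \<in> L" for x y
    unfolding sr_iff by (metis append.left_neutral append.right_neutral)
  then show ?thesis by blast
qed



lemma foldl_min: "foldl min_delta X w = {v. w@v \<in> X}"
  by (induction w arbitrary: X) (auto simp: min_delta_def)

lemma foldl_fix: "(\<forall>a. d z a = z) \<Longrightarrow> foldl d z v = z"
  by (induction v) auto

lemma factor_from_zeroaut:
  assumes "zero_automaton (min_states L) min_delta"
  shows "\<exists>w b. \<forall>x y. x@w@y \<in> L \<longleftrightarrow> b"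
proof -
  obtain w q where sync: "\<forall>p\<in>min_states L. foldl min_delta p w = q"
    using assms unfolding zero_automaton_def synchronising_def by blast
  obtain z where z: "z \<in> min_states L" "\<forall>a. min_delta z a = z"
    using assms unfolding zero_automaton_def sink_state_def by blast
  have "foldl min_delta z w = q" using sync z(1) by blast
  moreover have "foldl min_delta z w = z" using foldl_fix[of min_delta z w] z(2) by blast
  ultimately have "q = z" by simp
  have zc: "v \<in> z \<longleftrightarrow> [] \<in> z" for v
  proof (induction v)
    case (Cons a v)
    have "a # v \<in> z \<longleftrightarrow> v \<in> min_delta z a" unfolding min_delta_def by simp
    then show ?case using Cons z(2) by simp
  qed simp
  have "x@w@y \<in> L \<longleftrightarrow> [] \<in> z" for x y
  proof -
    have "lquot L x \<in> min_states L" unfolding min_states_def by simp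
    then have "foldl min_delta (lquot L x) w = z" using sync \<open>q = z\<close> by blast
    then have "{v. w@v \<in> lquot L x} = z" by (simp add: foldl_min)
    then have "y \<in> z \<longleftrightarrow> x@w@y \<in> L" unfolding lquot_def by auto
    then show ?thesis using zc[of y] by blast
  qed
  then show ?thesis by blast
qed

lemma fold_closed: "q \<in> Q \<Longrightarrow> \<forall>q\<in>Q. \<forall>a. d q a \<in> Q \<Longrightarrow> foldl d q w \<in> Q"
  by (induction w arbitrary: q) auto

lemma reach_trans: "reach d p q \<Longrightarrow> reach d q r \<Longrightarrow> reach d p r"
  unfolding reach_def by (metis foldl_append)

lemma reach_refl: "reach d p p"
  unfolding reach_def by (metis foldl_Nil)

lemma S_closed: "s \<in> \<Union>(Sink Q d) \<Longrightarrow> foldl d s v \<in> \<Union>(Sink Q d)"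
  unfolding Sink_def sink_component_def reach_def by blast

lemma S_sub: "\<Union>(Sink Q d) \<subseteq> Q"
  unfolding Sink_def sink_component_def by blast

lemma reach_S:
  assumes "dfa Q d q0 F" "q \<in> Q"
  shows "\<exists>w. foldl d q w \<in> \<Union>(Sink Q d)"
proof -
  have cl: "\<forall>q\<in>Q. \<forall>a. d q a \<in> Q" and fin: "finite Q" using assms(1) unfolding dfa_def by auto
  define R where "R p = {x. reach d p x}" for p
  have RQ: "R p \<subseteq> Q" if "p \<in> Q" for p
    unfolding R_def reach_def using fold_closed[OF that cl] by blast
  have qR: "q \<in> R q" unfolding R_def by (simp add: reach_refl)
  obtain p where p: "p \<in> R q" and pmin: "\<forall>p'. p' \<in> R q \<longrightarrow> card (R p) \<le> card (R p')"
    using ex_has_least_nat[of "\<lambda>p. p \<in> R q" q "\<lambda>p. card (R p)", OF qR] by blast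
  have pQ: "p \<in> Q" using p RQ[OF assms(2)] by blast
  have Rm: "x \<in> R y \<longleftrightarrow> reach d y x" for x y by (simp add: R_def)
  have fR: "finite (R p)" using RQ[OF pQ] fin by (rule finite_subset)
  have c1: "R p \<noteq> {}" using reach_refl[of d p] Rm by blast
  have c2: "x \<in> R p" if "p1 \<in> R p" "reach d p1 x" for p1 x
    using that reach_trans[of d p p1 x] Rm by blast
  have c3: "reach d p1 p2" if p1: "p1 \<in> R p" and p2: "p2 \<in> R p" for p1 p2
  proof -
    have sub: "R p1 \<subseteq> R p"
    proof
      fix x assume "x \<in> R p1" then show "x \<in> R p" using c2[OF p1] Rm by blast
    qed
    have qp: "reach d q p" using p Rm by blast
    have "reach d p p1" using p1 Rm by blast
    then have "reach d q p1" by (rule reach_trans[OF qp])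
    then have "p1 \<in> R q" using Rm by blast
    then have "card (R p) \<le> card (R p1)" using pmin by blast
    moreover have "card (R p1) \<le> card (R p)" by (rule card_mono[OF fR sub])
    ultimately have "card (R p1) = card (R p)" by simp
    then have "R p1 = R p" by (rule card_subset_eq[OF fR sub])
    then show ?thesis using p2 Rm by blast
  qed
  have "sink_component Q d (R p)"
    unfolding sink_component_def
  proof (intro conjI)
    show "\<forall>p1\<in>R p. \<forall>p2\<in>R p. reach d p1 p2" using c3 by blast
    show "\<forall>p1\<in>R p. \<forall>x. reach d p1 x \<longrightarrow> x \<in> R p" using c2 by blast
  qed (use c1 RQ[OF pQ] in auto)
  moreover have "p \<in> R p" using Rm[of p p] reach_refl[of d p] by blast
  ultimately have pS: "p \<in> \<Union>(Sink Q d)" unfolding Sink_def by blast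
  have "reach d q p" using p Rm[of p q] by blast
  then obtain w where "foldl d q w = p" unfolding reach_def by blast
  then show ?thesis using pS by blast
qed

lemma sync_S:
  assumes "dfa Q d q0 F"
  shows "\<exists>w. \<forall>q\<in>Q. foldl d q w \<in> \<Union>(Sink Q d)"
proof -
  have cl: "\<forall>q\<in>Q. \<forall>a. d q a \<in> Q" and fin: "finite Q" using assms(1) unfolding dfa_def by auto
  have "Q' \<subseteq> Q \<Longrightarrow> \<exists>w. \<forall>q\<in>Q'. foldl d q w \<in> \<Union>(Sink Q d)" if "finite Q'" for Q'
    using that
  proof (induction Q' rule: finite_induct)
    case empty then show ?case by simp
  next
    case (insert q Q')
    then obtain w where w: "\<forall>q\<in>Q'. foldl d q w \<in> \<Union>(Sink Q d)" by auto
    have qQ: "q \<in> Q" using insert.prems by simp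
    have "foldl d q w \<in> Q" by (rule fold_closed[OF qQ cl])
    then obtain w' where w': "foldl d (foldl d q w) w' \<in> \<Union>(Sink Q d)"
      using reach_S[OF assms] by blast
    have "\<forall>p\<in>insert q Q'. foldl d p (w@w') \<in> \<Union>(Sink Q d)"
    proof
      fix p assume p: "p \<in> insert q Q'"
      show "foldl d p (w@w') \<in> \<Union>(Sink Q d)"
      proof (cases "p = q")
        case True then show ?thesis using w' by simp
      next
        case False
        then have "p \<in> Q'" using p by simp
        then have "foldl d p w \<in> \<Union>(Sink Q d)" using w by blast
        then have "foldl d (foldl d p w) w' \<in> \<Union>(Sink Q d)" by (rule S_closed)
        then show ?thesis by simp
      qed
    qed
    then show ?case by blast
  qed
  then show ?thesis using fin by blast
qed

lemma zeroaut_from_qz: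
  fixes d :: "'s \<Rightarrow> 'a \<Rightarrow> 's" and L :: "'a list set"
  assumes D: "dfa Q d q0 F" and La: "lang d q0 F = L" and qz: "quasi_zero Q d F"
  shows "zero_automaton (min_states L) min_delta"
proof -
  define b where "b = (\<Union>(Sink Q d) \<subseteq> F)"
  have bS: "s \<in> F \<longleftrightarrow> b" if "s \<in> \<Union>(Sink Q d)" for s
    using qz that unfolding quasi_zero_def b_def by blast
  define Z where "Z = (if b then UNIV else {} :: 'a list set)"
  have Sv: "{v. foldl d s v \<in> F} = Z" if "s \<in> \<Union>(Sink Q d)" for s
    using bS[OF S_closed[OF that]] unfolding Z_def by auto
  have lq: "lquot L u = {v. foldl d (foldl d q0 u) v \<in> F}" for u
    using La unfolding lquot_def lang_def by auto
  obtain w where w: "\<forall>q\<in>Q. foldl d q w \<in> \<Union>(Sink Q d)" using sync_S[OF D] by blast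
  have cl: "\<forall>q\<in>Q. \<forall>a. d q a \<in> Q" and q0: "q0 \<in> Q" using D unfolding dfa_def by auto
  have key: "lquot L (u@w) = Z" for u
  proof -
    have "foldl d q0 u \<in> Q" using fold_closed[OF q0 cl] .
    then have "foldl d q0 (u@w) \<in> \<Union>(Sink Q d)" using w by simp
    then show ?thesis unfolding lq by (rule Sv)
  qed
  have sync: "synchronising (min_states L) min_delta"
    unfolding synchronising_def
  proof (intro exI ballI)
    fix p assume "p \<in> min_states L"
    then obtain u where "p = lquot L u" unfolding min_states_def by blast
    then show "foldl min_delta p w = Z" using key[of u] by (simp add: foldl_min lquot_def)
  qed
  have "Z \<in> min_states L" using key[of "[]"] unfolding min_states_def by (metis rangeI)
  moreover have "min_delta Z a = Z" for a unfolding min_delta_def Z_def by auto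
  ultimately have "sink_state (min_states L) min_delta Z" unfolding sink_state_def by blast
  then show ?thesis using sync unfolding zero_automaton_def by blast
qed

lemma sink_avoid:
  fixes d :: "'s \<Rightarrow> 'a::finite \<Rightarrow> 's"
  assumes D: "dfa Q d q0 F"
    and lim: "(\<lambda>n. real (card {v::'a list. length v = n \<and> foldl d q0 v \<in> G}) / real (card (UNIV::'a set))^n) \<longlonglongrightarrow> 0"
    and rS: "r \<in> \<Union>(Sink Q d)"
  shows "r \<notin> G"
proof
  assume rG: "r \<in> G"
  define C where "C = card (UNIV::'a set)"
  have C: "C > 0" unfolding C_def by (simp add: card_gt_0_iff)
  define cnt where "cnt q n = card {v::'a list. length v = n \<and> foldl d q v \<in> G}" for q n
  have finc: "finite {v::'a list. length v = n \<and> foldl d q v \<in> G}" for q n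
    by (rule finite_subset[OF _ fin_len[of n]]) auto
  obtain P where P: "sink_component Q d P" "r \<in> P" using rS unfolding Sink_def by blast
  have PQ: "P \<subseteq> Q" using P unfolding sink_component_def by blast
  obtain u where u: "foldl d q0 u = r" using D PQ P(2) unfolding dfa_def by blast
  define j where "j = length u"
  have c1: "cnt r n \<le> cnt q0 (n+j)" for n
  proof -
    have "(\<lambda>v. u@v) ` {v::'a list. length v = n \<and> foldl d r v \<in> G} \<subseteq> {v. length v = n+j \<and> foldl d q0 v \<in> G}"
      using u unfolding j_def by auto
    then have "card ((\<lambda>v. u@v) ` {v::'a list. length v = n \<and> foldl d r v \<in> G}) \<le> cnt q0 (n+j)"
      unfolding cnt_def by (rule card_mono[OF finc])
    moreover have "card ((\<lambda>v. u@v) ` {v::'a list. length v = n \<and> foldl d r v \<in> G}) = cnt r n"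
      unfolding cnt_def by (rule card_image) (simp add: inj_on_def)
    ultimately show ?thesis by simp
  qed
  define f where "f n = real (cnt r n) / real C^n" for n
  have f0: "f \<longlonglongrightarrow> 0"
  proof -
    have g: "(\<lambda>n. real C^j * (real (cnt q0 (n+j)) / real C^(n+j))) \<longlonglongrightarrow> real C^j * 0"
      using LIMSEQ_ignore_initial_segment[OF lim, of j] unfolding cnt_def C_def
      by (intro tendsto_intros) simp
    have "f n \<le> real C^j * (real (cnt q0 (n+j)) / real C^(n+j))" for n
    proof -
      have "f n \<le> real (cnt q0 (n+j)) / real C^n" unfolding f_def
        by (rule divide_right_mono) (use c1[of n] in auto)
      also have "\<dots> = real C^j * (real (cnt q0 (n+j)) / real C^(n+j))"
        using C by (simp add: power_add)
      finally show ?thesis .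
    qed
    then have le: "\<forall>n. f n \<le> real C^j * (real (cnt q0 (n+j)) / real C^(n+j))" by blast
    have ge: "\<forall>n. 0 \<le> f n" unfolding f_def by simp
    have g2: "(\<lambda>n. real C^j * (real (cnt q0 (n+j)) / real C^(n+j))) \<longlonglongrightarrow> 0" using g by simp
    show ?thesis
      by (rule tendsto_sandwich[OF always_eventually[OF ge] always_eventually[OF le] tendsto_const g2])
  qed
  have allr: "\<forall>p\<in>P. \<forall>q\<in>P. reach d p q" and clo: "\<forall>p\<in>P. \<forall>q. reach d p q \<longrightarrow> q \<in> P"
    using P(1) unfolding sink_component_def by blast+
  have bk: "\<forall>s\<in>P. \<exists>t. foldl d s t = r" using allr P(2) unfolding reach_def by blast
  then obtain t where t: "\<forall>s\<in>P. foldl d s (t s) = r" by metis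
  have "finite Q" using D unfolding dfa_def by simp
  then have finP: "finite P" using PQ finite_subset by blast
  define K where "K = Max ((\<lambda>s. length (t s)) ` P)"
  have tK: "length (t s) \<le> K" if "s \<in> P" for s unfolding K_def using finP that by simp
  have inP: "foldl d r v \<in> P" for v
  proof -
    have "reach d r (foldl d r v)" unfolding reach_def by blast
    then show ?thesis using clo P(2) by blast
  qed
  have main: "real C^n \<le> (\<Sum>k=0..K. real (cnt r (n+k)))" for n
  proof -
    define \<phi> where "\<phi> v = v @ t (foldl d r v)" for v
    have inj: "inj_on \<phi> {v::'a list. length v = n}"
      unfolding inj_on_def \<phi>_def by (metis (mono_tags) append_eq_append_conv mem_Collect_eq)
    have sub: "\<phi> ` {v::'a list. length v = n} \<subseteq> (\<Union>k\<in>{0..K}. {x. length x = n+k \<and> foldl d r x \<in> G})"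
    proof
      fix x assume "x \<in> \<phi> ` {v::'a list. length v = n}"
      then obtain v where v: "length v = n" "x = \<phi> v" by blast
      have "length (t (foldl d r v)) \<le> K" using tK inP by blast
      moreover have "foldl d r x = r" unfolding v \<phi>_def using t inP by simp
      ultimately show "x \<in> (\<Union>k\<in>{0..K}. {x. length x = n+k \<and> foldl d r x \<in> G})"
        using v rG unfolding \<phi>_def by auto
    qed
    have "card {v::'a list. length v = n} = card (\<phi> ` {v::'a list. length v = n})"
      using card_image[OF inj] by simp
    also have "\<dots> \<le> card (\<Union>k\<in>{0..K}. {x::'a list. length x = n+k \<and> foldl d r x \<in> G})"
      by (rule card_mono[OF _ sub]) (use finc in auto)
    also have "\<dots> \<le> (\<Sum>k=0..K. cnt r (n+k))" unfolding cnt_def by (rule card_UN_le) simp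
    finally have "C^n \<le> (\<Sum>k=0..K. cnt r (n+k))" unfolding card_len C_def .
    then have "real (C^n) \<le> real (\<Sum>k=0..K. cnt r (n+k))" by linarith
    then show ?thesis by simp
  qed
  have ge1: "1 \<le> (\<Sum>k=0..K. real C^k * f (n+k))" for n
  proof -
    have P: "real C^n > 0" using C by simp
    have "(\<Sum>k=0..K. real C^k * f (n+k)) = (\<Sum>k=0..K. real (cnt r (n+k))) / real C^n"
      unfolding f_def sum_divide_distrib using C by (intro sum.cong) (auto simp: power_add)
    also have "\<dots> \<ge> 1" using main[of n] P by simp
    finally show ?thesis .
  qed
  have "(\<lambda>n. \<Sum>k=0..K. real C^k * f (n+k)) \<longlonglongrightarrow> (\<Sum>k=0..K. real C^k * 0)"
    by (intro tendsto_sum tendsto_mult tendsto_const LIMSEQ_ignore_initial_segment[OF f0])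
  then have "(\<lambda>n. \<Sum>k=0..K. real C^k * f (n+k)) \<longlonglongrightarrow> 0" by simp
  then have "1 \<le> (0::real)" by (rule LIMSEQ_le_const) (use ge1 in auto)
  then show False by simp
qed

lemma aux: fixes x a b :: real assumes "x > 0" "x = a + b" shows "a / x = 1 - b / x"
proof -
  have "1 - b/x = x/x - b/x" using assms(1) by simp
  also have "\<dots> = (x - b)/x" by (rule diff_divide_distrib[symmetric])
  also have "\<dots> = a/x" using assms(2) by simp
  finally show ?thesis by simp
qed

lemma qz_from_zo:
  fixes d :: "'s \<Rightarrow> 'a::finite \<Rightarrow> 's" and L :: "'a list set"
  assumes D: "dfa Q d q0 F" and La: "lang d q0 F = L"
    and lim: "mu_n L \<longlonglongrightarrow> l" and l: "l = 0 \<or> l = 1"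
  shows "quasi_zero Q d F"
proof -
  define C where "C = card (UNIV::'a set)"
  have C: "C > 0" unfolding C_def by (simp add: card_gt_0_iff)
  have Lset: "{w\<in>L. length w = n} = {v::'a list. length v = n \<and> foldl d q0 v \<in> F}" for n
    using La unfolding lang_def by auto
  have mu: "mu_n L n = real (card {v::'a list. length v = n \<and> foldl d q0 v \<in> F}) / real C^n" for n
    unfolding mu_n_def Lset C_def ..
  show ?thesis
  proof (cases "l = 0")
    case True
    have "r \<notin> F" if "r \<in> \<Union>(Sink Q d)" for r
    proof (rule sink_avoid[OF D _ that])
      have "mu_n L = (\<lambda>n. real (card {v::'a list. length v = n \<and> foldl d q0 v \<in> F}) / real (card (UNIV::'a set))^n)"
        by (rule ext) (simp add: mu C_def)
      then show "(\<lambda>n. real (card {v::'a list. length v = n \<and> foldl d q0 v \<in> F}) / real (card (UNIV::'a set))^n) \<longlonglongrightarrow> 0"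
        using lim True by simp
    qed
    then show ?thesis unfolding quasi_zero_def by blast
  next
    case False
    then have l1: "l = 1" using l by simp
    have split: "real (card {v::'a list. length v = n \<and> foldl d q0 v \<in> -F}) / real C^n = 1 - mu_n L n" for n
    proof -
      let ?A = "{v::'a list. length v = n \<and> foldl d q0 v \<in> -F}"
      let ?B = "{v::'a list. length v = n \<and> foldl d q0 v \<in> F}"
      have U: "{v::'a list. length v = n} = ?A \<union> ?B" by auto
      have fA: "finite ?A" by (rule finite_subset[OF _ fin_len[of n]]) auto
      have fB: "finite ?B" by (rule finite_subset[OF _ fin_len[of n]]) auto
      have "card (?A \<union> ?B) = card ?A + card ?B" by (rule card_Un_disjoint[OF fA fB]) auto
      then have "card {v::'a list. length v = n} = card ?A + card ?B" unfolding U .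
      then have "C^n = card ?A + card ?B" unfolding card_len C_def .
      then have "real (C^n) = real (card ?A + card ?B)" by simp
      then have "real C^n = real (card {v::'a list. length v = n \<and> foldl d q0 v \<in> -F}) + real (card {v::'a list. length v = n \<and> foldl d q0 v \<in> F})"
        by simp
      moreover have Pn: "real C^n > 0" using C by simp
      ultimately show ?thesis unfolding mu by (intro aux)
    qed
    have "(\<lambda>n. 1 - mu_n L n) \<longlonglongrightarrow> 1 - 1" using lim l1 by (intro tendsto_intros) simp
    then have lim2: "(\<lambda>n. real (card {v::'a list. length v = n \<and> foldl d q0 v \<in> -F}) / real (card (UNIV::'a set))^n) \<longlonglongrightarrow> 0"
      using split unfolding C_def by simp
    have "r \<in> F" if "r \<in> \<Union>(Sink Q d)" for r
      using sink_avoid[OF D lim2 that] by simp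
    then show ?thesis unfolding quasi_zero_def by blast
  qed
qed


theorem theorem1:
  fixes L :: "('a::finite) list set"
  assumes "regular L"
  shows "(zero_automaton (min_states L) min_delta \<longleftrightarrow> language_with_zero L)
       \<and> (language_with_zero L \<longleftrightarrow> zero_one L)
       \<and> (zero_one L \<longleftrightarrow>
            (\<exists>(Q::nat set) delta q0 F. dfa Q delta q0 F \<and> lang delta q0 F = L
               \<and> quasi_zero Q delta F))"
proof -
  have i12: "language_with_zero L" if za: "zero_automaton (min_states L) min_delta"
  proof -
    obtain w b where "\<forall>x y. x@w@y \<in> L \<longleftrightarrow> b" using factor_from_zeroaut[OF za] by blast
    then show ?thesis using zero_from_factor[of w L b] by blast
  qed
  have i23: "zero_one L" if lz: "language_with_zero L"
  proof -
    obtain w b where "\<forall>x y. x@w@y \<in> L \<longleftrightarrow> b" using factor_from_zero[OF lz] by blast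
    then have "mu_n L \<longlonglongrightarrow> (if b then 1 else 0)" using dens[of w L b] by blast
    moreover have "(if b then 1 else 0) = (0::real) \<or> (if b then 1 else 0) = (1::real)" by simp
    ultimately show ?thesis unfolding zero_one_def using assms by blast
  qed
  have i34: "\<exists>(Q::nat set) delta q0 F. dfa Q delta q0 F \<and> lang delta q0 F = L \<and> quasi_zero Q delta F"
    if zo: "zero_one L"
  proof -
    obtain l where l: "mu_n L \<longlonglongrightarrow> l" "l = 0 \<or> l = 1" using zo unfolding zero_one_def by blast
    obtain Q :: "nat set" and delta q0 F where D: "dfa Q delta q0 F" "lang delta q0 F = L"
      using assms unfolding regular_def by blast
    have "quasi_zero Q delta F" by (rule qz_from_zo[OF D l])
    then show ?thesis using D by blast
  qed
  have i41: "zero_automaton (min_states L) min_delta"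
    if ex: "\<exists>(Q::nat set) delta q0 F. dfa Q delta q0 F \<and> lang delta q0 F = L \<and> quasi_zero Q delta F"
  proof -
    obtain Q :: "nat set" and delta q0 F where "dfa Q delta q0 F" "lang delta q0 F = L" "quasi_zero Q delta F"
      using ex by blast
    then show ?thesis by (rule zeroaut_from_qz)
  qed
  show ?thesis using i12 i23 i34 i41 by blast
qed

end
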